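(* Let $a,b,c,d\in\mathbb{C}$ be the vertices, in this order, of a convex quadrilateral, and let $\alpha$ and $\gamma$ be its inner angles at $a$ and $c$. Then \[ p(a,b,c,d)\le\frac{1}{\sin\frac{\alpha+\gamma}{2}}. \]
   Context: For four distinct points $a,b,c,d\in\mathbb{C}$, $p(a,b,c,d)=\frac{|a-b||c-d|+|a-d||b-c|}{|a-c||b-d|}$. *)

theory Defs
  imports "HOL-Analysis.Analysis"
begin

definition p :: "complex \<Rightarrow> complex \<Rightarrow> complex \<Rightarrow> complex \<Rightarrow> real" where
  "p a b c d = (cmod (a - b) * cmod (c - d) + cmod (a - d) * cmod (b - c)) / (cmod (a - c) * cmod (b - d))"

definition cross2 :: "complex \<Rightarrow> complex \<Rightarrow> real" where
  "cross2 z w = Im (cnj z * w)"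

definition convex_quadrilateral :: "complex \<Rightarrow> complex \<Rightarrow> complex \<Rightarrow> complex \<Rightarrow> bool" where
  "convex_quadrilateral a b c d \<longleftrightarrow>
     (cross2 (b - a) (c - b) > 0 \<and> cross2 (c - b) (d - c) > 0 \<and>
      cross2 (d - c) (a - d) > 0 \<and> cross2 (a - d) (b - a) > 0) \<or>
     (cross2 (b - a) (c - b) < 0 \<and> cross2 (c - b) (d - c) < 0 \<and>
      cross2 (d - c) (a - d) < 0 \<and> cross2 (a - d) (b - a) < 0)"

definition vec_angle :: "complex \<Rightarrow> complex \<Rightarrow> real" where
  "vec_angle u v = arccos ((u \<bullet> v) / (cmod u * cmod v))"

definition inner_angle :: "complex \<Rightarrow> complex \<Rightarrow> complex \<Rightarrow> real" where
  "inner_angle y x z = vec_angle (y - x) (z - x)"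

end

theory Submission
  imports Defs
begin

lemma angle_cos_sin:
  fixes z w :: complex
  assumes "z \<noteq> 0" "w \<noteq> 0"
  shows "cos (vec_angle w z) = Re (z * cnj w) / (cmod z * cmod w)"
    and "sin (vec_angle w z) = \<bar>Im (z * cnj w)\<bar> / (cmod z * cmod w)"
    and "0 \<le> vec_angle w z" "vec_angle w z \<le> pi"
proof -
  define P where "P = z * cnj w"
  have nP: "cmod P = cmod z * cmod w" unfolding P_def by (simp add: norm_mult)
  have pos: "cmod P > 0" using assms nP by simp
  have inn: "w \<bullet> z = Re P" unfolding P_def inner_complex_def by (simp add: algebra_simps)
  define k where "k = Re P / cmod P"
  have va: "vec_angle w z = arccos k" unfolding vec_angle_def k_def inn nP by (simp add: mult.commute)
  have sq: "(cmod P)^2 = (Re P)^2 + (Im P)^2" by (simp add: cmod_power2)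
  have "\<bar>Re P\<bar> \<le> cmod P" by (rule abs_Re_le_cmod)
  hence kb: "\<bar>k\<bar> \<le> 1" using pos unfolding k_def abs_divide
    by (simp add: divide_le_eq_1)
  have "1 - k^2 = (Im P / cmod P)^2"
  proof -
    have "1 - k^2 = ((cmod P)^2 - (Re P)^2) / (cmod P)^2" unfolding k_def using pos
      by (simp add: diff_divide_distrib power_divide)
    also have "\<dots> = (Im P)^2 / (cmod P)^2" using sq by simp
    finally show ?thesis by (simp add: power_divide)
  qed
  hence "sqrt (1 - k^2) = \<bar>Im P\<bar> / cmod P" using pos by (simp add: real_sqrt_divide)
  thus "sin (vec_angle w z) = \<bar>Im (z * cnj w)\<bar> / (cmod z * cmod w)"
    using va kb sin_arccos_abs P_def nP by simp
  show "cos (vec_angle w z) = Re (z * cnj w) / (cmod z * cmod w)"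
  proof -
    have "cos (vec_angle w z) = k" using va kb cos_arccos_abs by simp
    thus ?thesis unfolding k_def P_def nP[unfolded P_def] .
  qed
  show "0 \<le> vec_angle w z" "vec_angle w z \<le> pi" using va kb arccos_lbound arccos_ubound by auto
qed


lemma final_ineq:
  fixes m n C s W :: real
  assumes "m \<ge> 0" "n \<ge> 0" "C \<ge> -1" "s > 0" "s^2 = (1 - C)/2"
    "W^2 = m^2 + n^2 - 2*m*n*C" "W \<ge> 0"
  shows "(m + n) * s \<le> W"
proof -
  have ss: "s * s = (1 - C) / 2" using assms(5) by (simp add: power2_eq_square)
  have ww: "W * W = m * m + n * n - 2 * m * n * C" using assms(6) by (simp add: power2_eq_square)
  have e: "W * W - (m + n) * (m + n) * (s * s) = ((1 + C) / 2) * ((m - n) * (m - n))"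
    unfolding ss ww by (simp add: field_simps)
  have "((1 + C) / 2) * ((m - n) * (m - n)) \<ge> 0" using assms(3) by simp
  hence "(m + n) * (m + n) * (s * s) \<le> W * W" using e by linarith
  hence "((m + n) * s)^2 \<le> W^2" by (simp add: power2_eq_square mult_ac)
  thus ?thesis using assms by (meson power2_le_imp_le)
qed

theorem proposition4p1:
  fixes a b c d :: complex and \<alpha> \<gamma> :: real
  assumes "convex_quadrilateral a b c d"
    and "\<alpha> = inner_angle d a b"
    and "\<gamma> = inner_angle b c d"
  shows "p a b c d \<le> 1 / sin ((\<alpha> + \<gamma>) / 2)"
proof -
  define P where "P = (b - a) * cnj (d - a)"
  define Q where "Q = (d - c) * cnj (b - c)"
  have ImP: "Im P = - cross2 (a - d) (b - a)" unfolding P_def cross2_def by (simp add: algebra_simps)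
  have ImQ: "Im Q = - cross2 (c - b) (d - c)" unfolding Q_def cross2_def by (simp add: algebra_simps)
  have prod: "Im P * Im Q > 0"
    using assms(1) unfolding convex_quadrilateral_def ImP ImQ by (auto simp: mult_neg_neg)
  hence "Im P \<noteq> 0" "Im Q \<noteq> 0" by auto
  hence ne: "b - a \<noteq> 0" "d - a \<noteq> 0" "d - c \<noteq> 0" "b - c \<noteq> 0"
    unfolding P_def Q_def by auto
  note A = angle_cos_sin[OF ne(1) ne(2)] and G = angle_cos_sin[OF ne(3) ne(4)]
  have al: "\<alpha> = vec_angle (d - a) (b - a)" using assms(2) unfolding inner_angle_def .
  have ga: "\<gamma> = vec_angle (b - c) (d - c)" using assms(3) unfolding inner_angle_def .
  have nP: "cmod P = cmod (b - a) * cmod (d - a)" unfolding P_def norm_mult complex_mod_cnj ..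
  have nQ: "cmod Q = cmod (d - c) * cmod (b - c)" unfolding Q_def norm_mult complex_mod_cnj ..
  have pP: "cmod P > 0" "cmod Q > 0" using ne nP nQ by auto
  have ca: "cos \<alpha> = Re P / cmod P" using A(1) al P_def nP by simp
  have sa: "sin \<alpha> = \<bar>Im P\<bar> / cmod P" using A(2) al P_def nP by simp
  have cg: "cos \<gamma> = Re Q / cmod Q" using G(1) ga Q_def nQ by simp
  have sg: "sin \<gamma> = \<bar>Im Q\<bar> / cmod Q" using G(2) ga Q_def nQ by simp
  have "\<bar>Im P\<bar> * \<bar>Im Q\<bar> = Im P * Im Q" using prod by (simp add: abs_mult[symmetric])
  hence cth: "cos (\<alpha> + \<gamma>) = Re (P * Q) / (cmod P * cmod Q)"
    unfolding cos_add ca sa cg sg using pP by (simp add: field_simps)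
  have "sin \<alpha> > 0" "sin \<gamma> > 0" using sa sg pP \<open>Im P \<noteq> 0\<close> \<open>Im Q \<noteq> 0\<close> by auto
  hence "\<alpha> \<noteq> 0" "\<gamma> \<noteq> 0" by auto
  moreover have "0 \<le> \<alpha>" "\<alpha> \<le> pi" "0 \<le> \<gamma>" "\<gamma> \<le> pi" using A(3,4) G(3,4) al ga by auto
  moreover have "\<alpha> \<noteq> pi" "\<gamma> \<noteq> pi" using \<open>sin \<alpha> > 0\<close> \<open>sin \<gamma> > 0\<close> by auto
  ultimately have rng: "0 < (\<alpha> + \<gamma>) / 2" "(\<alpha> + \<gamma>) / 2 < pi" by auto
  define s where "s = sin ((\<alpha> + \<gamma>) / 2)"
  have spos: "s > 0" unfolding s_def using rng sin_gt_zero by blast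
  have s2: "s^2 = (1 - cos (\<alpha> + \<gamma>)) / 2"
  proof -
    have "cos (2 * ((\<alpha> + \<gamma>) / 2)) = 1 - 2 * s^2"
      unfolding s_def by (rule cos_double_sin)
    moreover have "2 * ((\<alpha> + \<gamma>) / 2) = \<alpha> + \<gamma>" by simp
    ultimately have "cos (\<alpha> + \<gamma>) = 1 - 2 * s^2" by metis
    thus ?thesis by simp
  qed
  define u where "u = (a - b) * (c - d)"
  define v where "v = (a - d) * (b - c)"
  have uv: "u + v = (a - c) * (b - d)" unfolding u_def v_def by (simp add: algebra_simps)
  have uvc: "u * cnj v = - (P * Q)" unfolding u_def v_def P_def Q_def
    by (simp add: algebra_simps)
  have nu: "cmod u * cmod v = cmod P * cmod Q" unfolding u_def v_def nP nQ
    by (simp add: norm_mult norm_minus_commute)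
  have W2: "(cmod (u + v))^2 = (cmod u)^2 + (cmod v)^2 + 2 * Re (u * cnj v)"
    unfolding cmod_power2 by (simp add: power2_eq_square algebra_simps)
  have W2': "(cmod (u + v))^2 = (cmod u)^2 + (cmod v)^2 - 2 * cmod u * cmod v * cos (\<alpha> + \<gamma>)"
  proof -
    have "2 * cmod u * cmod v * cos (\<alpha> + \<gamma>) = 2 * (cmod P * cmod Q) * (Re (P * Q) / (cmod P * cmod Q))"
      unfolding cth using nu by (simp add: mult.assoc)
    also have "\<dots> = 2 * Re (P * Q)" using pP by simp
    finally show ?thesis unfolding W2 uvc by simp
  qed
  have key: "(cmod u + cmod v) * s \<le> cmod (u + v)"
    by (rule final_ineq[OF _ _ _ spos s2 W2']) auto
  have pe: "p a b c d = (cmod u + cmod v) / cmod (u + v)"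
  proof -
    have "cmod (a - c) * cmod (b - d) = cmod (u + v)" unfolding uv norm_mult ..
    moreover have "cmod u = cmod (a - b) * cmod (c - d)" "cmod v = cmod (a - d) * cmod (b - c)"
      unfolding u_def v_def norm_mult by simp_all
    ultimately show ?thesis unfolding p_def by simp
  qed
  show ?thesis
  proof (cases "cmod (u + v) = 0")
    case True thus ?thesis using pe spos s_def by simp
  next
    case False
    hence "cmod (u + v) > 0" by simp
    thus ?thesis using key spos unfolding pe s_def[symmetric]
      by (simp add: divide_simps mult.commute)
  qed
qed

end
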